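(* Let $S \subseteq \mathbb{R}^n$ be nonempty, closed and convex, and let $F_i = f_i + g_i$, $i=1,\dots,m$, where each $f_i \colon S \to \mathbb{R}$ is continuously differentiable and each $g_i \colon S \to \mathbb{R}$ is convex. For $\ell \ge 0$ and $x \in S$ define (with values in $\mathbb{R}\cup\{\infty\}$) \[ u_\ell(x) := \sup_{y \in S} \min_{i} \left\{F_i(x) - F_i(y) - \frac{\ell}{2}\|x-y\|^2\right\}, \qquad w_\ell(x) := \sup_{y \in S} \min_{i} \left\{ \nabla f_i(x)^\top (x - y) + g_i(x) - g_i(y) - \frac{\ell}{2}\|x - y\|^2 \right\}, \] the minima being over $i = 1,\dots,m$. Then: (i) If each $f_i$ is $\mu_i$-convex for some $\mu_i \in \mathbb{R}$ and $\mu := \min_i \mu_i$, then for all $\ell > 0$ and $x \in S$: if $\mu \ge 0$, $u_0(x) \le w_\mu(x)$ and $u_\ell(x) \le w_{\mu+\ell}(x)$; otherwise $u_{-\mu+\ell}(x) \le w_\ell(x)$. (ii) If each $\nabla f_i$ is $L_i$-Lipschitz continuous for some $L_i > 0$ and $L := \max_i L_i$, then for all $\ell > 0$ and $x \in S$: $u_{L+\ell}(x) \le w_\ell(x)$, $u_0(x) \ge w_L(x)$, and $u_\ell(x) \ge w_{L+\ell}(x)$.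
   Context: A function $h \colon S \to \mathbb{R}$ is $\sigma$-convex ($\sigma\in\mathbb{R}$) if $h(\alpha x + (1-\alpha)y) \le \alpha h(x) + (1-\alpha)h(y) - \frac{\alpha(1-\alpha)\sigma}{2}\|x-y\|^2$ for all $x,y \in S$, $\alpha \in [0,1]$. *)

theory Defs
  imports "HOL-Analysis.Analysis"
begin

definition sigma_convex_on :: "'a::real_normed_vector set \<Rightarrow> real \<Rightarrow> ('a \<Rightarrow> real) \<Rightarrow> bool" where
  "sigma_convex_on S \<sigma> h \<longleftrightarrow>
     (\<forall>x\<in>S. \<forall>y\<in>S. \<forall>\<alpha>::real. 0 \<le> \<alpha> \<and> \<alpha> \<le> 1 \<longrightarrow>
        h (\<alpha> *\<^sub>R x + (1 - \<alpha>) *\<^sub>R y)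
          \<le> \<alpha> * h x + (1 - \<alpha>) * h y - \<alpha> * (1 - \<alpha>) * \<sigma> / 2 * (norm (x - y))\<^sup>2)"

definition u_fun :: "'a::euclidean_space set \<Rightarrow> nat \<Rightarrow> (nat \<Rightarrow> 'a \<Rightarrow> real) \<Rightarrow> real \<Rightarrow> 'a \<Rightarrow> ereal" where
  "u_fun S m F l x =
     (SUP y\<in>S. ereal (Min ((\<lambda>i. F i x - F i y - l / 2 * (norm (x - y))\<^sup>2) ` {1..m})))"

definition w_fun :: "'a::euclidean_space set \<Rightarrow> nat \<Rightarrow> (nat \<Rightarrow> 'a \<Rightarrow> 'a) \<Rightarrow> (nat \<Rightarrow> 'a \<Rightarrow> real)
                      \<Rightarrow> real \<Rightarrow> 'a \<Rightarrow> ereal" where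
  "w_fun S m gf g l x =
     (SUP y\<in>S. ereal (Min ((\<lambda>i. gf i x \<bullet> (x - y) + g i x - g i y - l / 2 * (norm (x - y))\<^sup>2) ` {1..m})))"

end

theory Submission imports Defs begin

lemma minsup_mono:
  fixes m :: nat
  assumes "m \<ge> 1" and "\<And>y i. y \<in> S \<Longrightarrow> i \<in> {1..m} \<Longrightarrow> A i y \<le> (B i y::real)"
  shows "(SUP y\<in>S. ereal (Min ((\<lambda>i. A i y) ` {1..m}))) \<le> (SUP y\<in>S. ereal (Min ((\<lambda>i. B i y) ` {1..m})))"
proof -
  have *: "Min ((\<lambda>i. A i y) ` {1..m}) \<le> Min ((\<lambda>i. B i y) ` {1..m})" if y: "y \<in> S" for y
  proof (subst Min_ge_iff)
    show "\<forall>a\<in>(\<lambda>i. B i y) ` {1..m}. Min ((\<lambda>i. A i y) ` {1..m}) \<le> a"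
    proof
      fix a assume "a \<in> (\<lambda>i. B i y) ` {1..m}"
      then obtain i where i: "i \<in> {1..m}" "a = B i y" by auto
      have "Min ((\<lambda>i. A i y) ` {1..m}) \<le> A i y" using i by (intro Min_le finite_imageI) auto
      also have "\<dots> \<le> a" using assms(2)[OF y i(1)] i by simp
      finally show "Min ((\<lambda>i. A i y) ` {1..m}) \<le> a" .
    qed
  qed (use assms(1) in auto)
  show ?thesis by (rule SUP_mono) (use * in auto)
qed

lemma path_deriv:
  fixes f :: "'a::euclidean_space \<Rightarrow> real"
  assumes "convex S" "x \<in> S" "y \<in> S"
    and d: "\<And>z. z \<in> S \<Longrightarrow> (f has_derivative (\<lambda>h. G z \<bullet> h)) (at z within S)"
    and t: "t \<in> {0..1}"
  shows "((\<lambda>t. f (x + t *\<^sub>R (y - x))) has_real_derivative (G (x + t *\<^sub>R (y - x)) \<bullet> (y - x))) (at t within {0..1})"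
proof -
  have sub: "(\<lambda>t. x + t *\<^sub>R (y - x)) ` {0..1} \<subseteq> S"
  proof
    fix z assume "z \<in> (\<lambda>t. x + t *\<^sub>R (y - x)) ` {0..1}"
    then obtain s where s: "s \<in> {0..1}" "z = x + s *\<^sub>R (y - x)" by auto
    have "z = (1 - s) *\<^sub>R x + s *\<^sub>R y" using s by (simp add: algebra_simps)
    then show "z \<in> S" using s assms(1-3) by (auto intro: convexD_alt)
  qed
  have p: "((\<lambda>t. x + t *\<^sub>R (y - x)) has_derivative (\<lambda>s. s *\<^sub>R (y - x))) (at t within {0..1})"
    by (auto intro!: derivative_eq_intros)
  have "((\<lambda>t. f (x + t *\<^sub>R (y - x))) has_derivative (\<lambda>s. G (x + t *\<^sub>R (y - x)) \<bullet> (s *\<^sub>R (y - x)))) (at t within {0..1})"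
    by (rule has_derivative_in_compose2[of S f "\<lambda>z h. G z \<bullet> h", OF d sub t p])
  moreover have "(\<lambda>s. G (x + t *\<^sub>R (y - x)) \<bullet> (s *\<^sub>R (y - x))) = (*) (G (x + t *\<^sub>R (y - x)) \<bullet> (y - x))"
    by (auto simp: mult.commute)
  ultimately show ?thesis
    unfolding has_field_derivative_def by simp
qed

lemma first_order_sigma:
  fixes f :: "'a::euclidean_space \<Rightarrow> real"
  assumes sc: "sigma_convex_on S \<sigma> f" and "convex S" "x \<in> S" "y \<in> S"
    and d: "\<And>z. z \<in> S \<Longrightarrow> (f has_derivative (\<lambda>h. G z \<bullet> h)) (at z within S)"
  shows "f x - f y \<le> G x \<bullet> (x - y) - \<sigma> / 2 * (norm (x - y))\<^sup>2"
proof -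
  define \<phi> where "\<phi> = (\<lambda>t. f (x + t *\<^sub>R (y - x)))"
  define c where "c = G x \<bullet> (y - x)"
  define D where "D = (norm (y - x))\<^sup>2"
  have "(\<phi> has_real_derivative c) (at 0 within {0..1})"
    using path_deriv[OF assms(2-4) d, of 0] unfolding \<phi>_def c_def by simp
  then have lim: "((\<lambda>t. (\<phi> t - \<phi> 0) / (t - 0)) \<longlongrightarrow> c) (at_right 0)"
    unfolding has_field_derivative_iff by (simp add: at_within_Icc_at_right)
  have ev: "eventually (\<lambda>t. (\<phi> t - \<phi> 0) / (t - 0) \<le> f y - f x - (1 - t) * \<sigma> / 2 * D) (at_right 0)"
    using eventually_at_right_real[of 0 "1::real", OF zero_less_one]
  proof (rule eventually_mono)
    fix t :: real assume t: "t \<in> {0<..<1}"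
    have "f (t *\<^sub>R y + (1 - t) *\<^sub>R x) \<le> t * f y + (1 - t) * f x - t * (1 - t) * \<sigma> / 2 * (norm (y - x))\<^sup>2"
      using sc assms(3,4) t unfolding sigma_convex_on_def by auto
    moreover have "t *\<^sub>R y + (1 - t) *\<^sub>R x = x + t *\<^sub>R (y - x)" by (simp add: algebra_simps)
    ultimately have "\<phi> t - \<phi> 0 \<le> t * ((f y - f x) - (1 - t) * \<sigma> / 2 * D)"
      unfolding \<phi>_def D_def by (simp add: algebra_simps)
    then show "(\<phi> t - \<phi> 0) / (t - 0) \<le> f y - f x - (1 - t) * \<sigma> / 2 * D"
      using t by (simp add: divide_le_eq mult.commute)
  qed
  have lim2: "((\<lambda>t. f y - f x - (1 - t) * \<sigma> / 2 * D) \<longlongrightarrow> f y - f x - (1 - 0) * \<sigma> / 2 * D) (at_right 0)"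
    by (intro tendsto_intros) auto
  have "c \<le> f y - f x - (1 - 0) * \<sigma> / 2 * D"
    by (rule tendsto_le[OF trivial_limit_at_right_real lim2 lim ev])
  moreover have "G x \<bullet> (x - y) = - c" unfolding c_def by (simp add: inner_diff_right)
  moreover have "norm (x - y) = norm (y - x)" by (rule norm_minus_commute)
  ultimately show ?thesis unfolding D_def by simp
qed

lemma descent:
  fixes f :: "'a::euclidean_space \<Rightarrow> real"
  assumes lip: "lipschitz_on L S G" and "convex S" "x \<in> S" "y \<in> S"
    and d: "\<And>z. z \<in> S \<Longrightarrow> (f has_derivative (\<lambda>h. G z \<bullet> h)) (at z within S)"
  shows "f y - f x - G x \<bullet> (y - x) \<le> L / 2 * (norm (y - x))\<^sup>2"
    and "- (L / 2 * (norm (y - x))\<^sup>2) \<le> f y - f x - G x \<bullet> (y - x)"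
proof -
  define \<phi> where "\<phi> = (\<lambda>t. f (x + t *\<^sub>R (y - x)))"
  define c where "c = G x \<bullet> (y - x)"
  define D where "D = (norm (y - x))\<^sup>2"
  define v where "v = y - x"
  have dphi: "(\<phi> has_real_derivative (G (x + t *\<^sub>R v) \<bullet> v)) (at t within {0..1})" if "t \<in> {0..1}" for t
    using path_deriv[OF assms(2-4) d that] unfolding \<phi>_def v_def by simp
  have mem: "x + t *\<^sub>R v \<in> S" if t: "t \<in> {0..1}" for t
  proof -
    have "x + t *\<^sub>R v = (1 - t) *\<^sub>R x + t *\<^sub>R y" unfolding v_def by (simp add: algebra_simps)
    then show ?thesis using t assms(2-4) by (auto intro: convexD_alt)
  qed
  have key: "\<bar>G (x + t *\<^sub>R v) \<bullet> v - c\<bar> \<le> L * t * D" if t: "t \<in> {0..1}" for t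
  proof -
    have "\<bar>G (x + t *\<^sub>R v) \<bullet> v - c\<bar> = \<bar>(G (x + t *\<^sub>R v) - G x) \<bullet> v\<bar>"
      unfolding c_def v_def by (simp add: inner_diff_left)
    also have "\<dots> \<le> norm (G (x + t *\<^sub>R v) - G x) * norm v" by (rule Cauchy_Schwarz_ineq2)
    also have "\<dots> \<le> (L * dist (x + t *\<^sub>R v) x) * norm v"
      using lipschitz_onD[OF lip mem[OF t] assms(3)] by (intro mult_right_mono) (auto simp: dist_norm)
    also have "\<dots> = L * t * D" using t unfolding D_def v_def dist_norm by (simp add: power2_eq_square)
    finally show ?thesis .
  qed
  define \<psi>1 where "\<psi>1 = (\<lambda>t. \<phi> t - t * c - L / 2 * t\<^sup>2 * D)"
  define \<psi>2 where "\<psi>2 = (\<lambda>t. \<phi> t - t * c + L / 2 * t\<^sup>2 * D)"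
  have d1: "(\<psi>1 has_real_derivative (G (x + t *\<^sub>R v) \<bullet> v - c - L * t * D)) (at t within {0..1})"
    if "t \<in> {0..1}" for t
    unfolding \<psi>1_def by (rule derivative_eq_intros dphi[OF that] refl | simp)+
  have d2: "(\<psi>2 has_real_derivative (G (x + t *\<^sub>R v) \<bullet> v - c + L * t * D)) (at t within {0..1})"
    if "t \<in> {0..1}" for t
    unfolding \<psi>2_def by (rule derivative_eq_intros dphi[OF that] refl | simp)+
  have "\<psi>1 0 \<ge> \<psi>1 1"
  proof (rule DERIV_nonpos_imp_decreasing_open[of 0 1 \<psi>1])
    fix t :: real assume t: "0 < t" "t < 1"
    then have "(\<psi>1 has_real_derivative (G (x + t *\<^sub>R v) \<bullet> v - c - L * t * D)) (at t)"
      using d1[of t] by (simp add: at_within_Icc_at)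
    moreover have "G (x + t *\<^sub>R v) \<bullet> v - c - L * t * D \<le> 0" using key[of t] t by auto
    ultimately show "\<exists>y. (\<psi>1 has_real_derivative y) (at t) \<and> y \<le> 0" by blast
  next
    show "continuous_on {0..1} \<psi>1" using d1 by (rule DERIV_continuous_on)
  qed simp
  then show "f y - f x - G x \<bullet> (y - x) \<le> L / 2 * (norm (y - x))\<^sup>2"
    unfolding \<psi>1_def \<phi>_def c_def D_def by simp
  have "\<psi>2 0 \<le> \<psi>2 1"
  proof (rule DERIV_nonneg_imp_increasing_open[of 0 1 \<psi>2])
    fix t :: real assume t: "0 < t" "t < 1"
    then have "(\<psi>2 has_real_derivative (G (x + t *\<^sub>R v) \<bullet> v - c + L * t * D)) (at t)"
      using d2[of t] by (simp add: at_within_Icc_at)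
    moreover have "G (x + t *\<^sub>R v) \<bullet> v - c + L * t * D \<ge> 0" using key[of t] t by auto
    ultimately show "\<exists>y. (\<psi>2 has_real_derivative y) (at t) \<and> y \<ge> 0" by blast
  next
    show "continuous_on {0..1} \<psi>2" using d2 by (rule DERIV_continuous_on)
  qed simp
  then show "- (L / 2 * (norm (y - x))\<^sup>2) \<le> f y - f x - G x \<bullet> (y - x)"
    unfolding \<psi>2_def \<phi>_def c_def D_def by simp
qed

theorem theorem4p1:
  fixes S :: "'a::euclidean_space set"
    and m :: nat
    and f g :: "nat \<Rightarrow> 'a \<Rightarrow> real"
    and gf :: "nat \<Rightarrow> 'a \<Rightarrow> 'a"
    and mu Lc :: "nat \<Rightarrow> real"
  assumes "S \<noteq> {}" and "closed S" and "convex S"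
    and "m \<ge> 1"
    and deriv: "\<And>i x. i \<in> {1..m} \<Longrightarrow> x \<in> S \<Longrightarrow>
                  (f i has_derivative (\<lambda>h. gf i x \<bullet> h)) (at x within S)"
    and cont: "\<And>i. i \<in> {1..m} \<Longrightarrow> continuous_on S (gf i)"
    and gconv: "\<And>i. i \<in> {1..m} \<Longrightarrow> convex_on S (g i)"
  shows
    "((\<forall>i\<in>{1..m}. sigma_convex_on S (mu i) (f i)) \<longrightarrow>
       (\<forall>l>0. \<forall>x\<in>S.
          (let \<mu> = Min (mu ` {1..m}) in
            if \<mu> \<ge> 0 then
              u_fun S m (\<lambda>i z. f i z + g i z) 0 x \<le> w_fun S m gf g \<mu> x \<and>
              u_fun S m (\<lambda>i z. f i z + g i z) l x \<le> w_fun S m gf g (\<mu> + l) x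
            else
              u_fun S m (\<lambda>i z. f i z + g i z) (- \<mu> + l) x \<le> w_fun S m gf g l x)))
     \<and>
     ((\<forall>i\<in>{1..m}. Lc i > 0 \<and> lipschitz_on (Lc i) S (gf i)) \<longrightarrow>
       (\<forall>l>0. \<forall>x\<in>S.
          (let L = Max (Lc ` {1..m}) in
            u_fun S m (\<lambda>i z. f i z + g i z) (L + l) x \<le> w_fun S m gf g l x \<and>
            u_fun S m (\<lambda>i z. f i z + g i z) 0 x \<ge> w_fun S m gf g L x \<and>
            u_fun S m (\<lambda>i z. f i z + g i z) l x \<ge> w_fun S m gf g (L + l) x)))"
proof (intro conjI impI allI ballI)
  have fin: "finite {1..m}" "{1..m} \<noteq> {}" using assms(4) by auto
  have dd: "\<And>i z. i \<in> {1..m} \<Longrightarrow> z \<in> S \<Longrightarrow> (f i has_derivative (\<lambda>h. gf i z \<bullet> h)) (at z within S)"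
    using deriv by blast
  {
    assume sc: "\<forall>i\<in>{1..m}. sigma_convex_on S (mu i) (f i)"
    define \<mu> where "\<mu> = Min (mu ` {1..m})"
    have gen: "u_fun S m (\<lambda>i z. f i z + g i z) ell x \<le> w_fun S m gf g (\<mu> + ell) x" if x: "x \<in> S" for ell x
      unfolding u_fun_def w_fun_def
    proof (rule minsup_mono[OF assms(4)])
      fix y i assume y: "y \<in> S" and i: "i \<in> {1..m}"
      have 1: "f i x - f i y \<le> gf i x \<bullet> (x - y) - mu i / 2 * (norm (x - y))\<^sup>2"
        by (rule first_order_sigma[OF _ assms(3) x y dd[OF i]]) (use sc i in auto)
      have "\<mu> \<le> mu i" unfolding \<mu>_def using fin i by (intro Min_le) auto
      then have 2: "\<mu> / 2 * (norm (x - y))\<^sup>2 \<le> mu i / 2 * (norm (x - y))\<^sup>2"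
        by (intro mult_right_mono) auto
      show "f i x + g i x - (f i y + g i y) - ell / 2 * (norm (x - y))\<^sup>2
            \<le> gf i x \<bullet> (x - y) + g i x - g i y - (\<mu> + ell) / 2 * (norm (x - y))\<^sup>2"
        using 1 2 by (simp add: field_simps)
    qed
    fix l :: real and x assume l: "l > 0" and x: "x \<in> S"
    show "let \<mu> = Min (mu ` {1..m}) in
            if \<mu> \<ge> 0 then
              u_fun S m (\<lambda>i z. f i z + g i z) 0 x \<le> w_fun S m gf g \<mu> x \<and>
              u_fun S m (\<lambda>i z. f i z + g i z) l x \<le> w_fun S m gf g (\<mu> + l) x
            else
              u_fun S m (\<lambda>i z. f i z + g i z) (- \<mu> + l) x \<le> w_fun S m gf g l x"
      using gen[OF x, of 0] gen[OF x, of l] gen[OF x, of "- \<mu> + l"] unfolding \<mu>_def Let_def by simp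
  }
  {
    assume lc: "\<forall>i\<in>{1..m}. Lc i > 0 \<and> lipschitz_on (Lc i) S (gf i)"
    define L where "L = Max (Lc ` {1..m})"
    fix l :: real and x assume l: "l > 0" and x: "x \<in> S"
    have bnd: "f i x - f i y \<le> gf i x \<bullet> (x - y) + L / 2 * (norm (x - y))\<^sup>2 \<and>
               gf i x \<bullet> (x - y) - L / 2 * (norm (x - y))\<^sup>2 \<le> f i x - f i y"
      if y: "y \<in> S" and i: "i \<in> {1..m}" for y i
    proof -
      have lip: "lipschitz_on (Lc i) S (gf i)" using lc i by auto
      have a: "f i x - f i y - gf i y \<bullet> (x - y) \<le> Lc i / 2 * (norm (x - y))\<^sup>2"
        by (rule descent(1)[OF lip assms(3) y x dd[OF i]])
      have b: "- (Lc i / 2 * (norm (y - x))\<^sup>2) \<le> f i y - f i x - gf i x \<bullet> (y - x)"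
        by (rule descent(2)[OF lip assms(3) x y dd[OF i]])
      have c: "f i y - f i x - gf i x \<bullet> (y - x) \<le> Lc i / 2 * (norm (y - x))\<^sup>2"
        by (rule descent(1)[OF lip assms(3) x y dd[OF i]])
      have "Lc i \<le> L" unfolding L_def using fin i by (intro Max_ge) auto
      then have e: "Lc i / 2 * (norm (x - y))\<^sup>2 \<le> L / 2 * (norm (x - y))\<^sup>2"
        by (intro mult_right_mono) auto
      have n: "norm (y - x) = norm (x - y)" by (rule norm_minus_commute)
      have ip: "gf i x \<bullet> (y - x) = - (gf i x \<bullet> (x - y))" by (simp add: inner_diff_right)
      show ?thesis using b c e unfolding n ip by linarith
    qed
    have A: "u_fun S m (\<lambda>i z. f i z + g i z) (L + l) x \<le> w_fun S m gf g l x"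
      unfolding u_fun_def w_fun_def
    proof (rule minsup_mono[OF assms(4)])
      fix y i assume y: "y \<in> S" and i: "i \<in> {1..m}"
      show "f i x + g i x - (f i y + g i y) - (L + l) / 2 * (norm (x - y))\<^sup>2
            \<le> gf i x \<bullet> (x - y) + g i x - g i y - l / 2 * (norm (x - y))\<^sup>2"
        using bnd[OF y i] by (simp add: field_simps)
    qed
    have B: "w_fun S m gf g (L + ell) x \<le> u_fun S m (\<lambda>i z. f i z + g i z) ell x" for ell
      unfolding u_fun_def w_fun_def
    proof (rule minsup_mono[OF assms(4)])
      fix y i assume y: "y \<in> S" and i: "i \<in> {1..m}"
      show "gf i x \<bullet> (x - y) + g i x - g i y - (L + ell) / 2 * (norm (x - y))\<^sup>2
            \<le> f i x + g i x - (f i y + g i y) - ell / 2 * (norm (x - y))\<^sup>2"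
        using bnd[OF y i] by (simp add: field_simps)
    qed
    show "let L = Max (Lc ` {1..m}) in
            u_fun S m (\<lambda>i z. f i z + g i z) (L + l) x \<le> w_fun S m gf g l x \<and>
            u_fun S m (\<lambda>i z. f i z + g i z) 0 x \<ge> w_fun S m gf g L x \<and>
            u_fun S m (\<lambda>i z. f i z + g i z) l x \<ge> w_fun S m gf g (L + l) x"
      using A B[of 0] B[of l] unfolding L_def Let_def by simp
  }
qed

end
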